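(* (i) Let $U_1=\ln Z_1-H_M(\underline\theta)$, $V=Z_2/Z_1\in[1,\infty)$ and $\rho=\min\{\theta_1,\theta_2\}/\max\{\theta_1,\theta_2\}\in(0,1]$. For every $v\ge1$, the conditional density of $U_1$ given $V=v$ is $$f_{2,\underline\theta}(u\mid v)=\frac{\rho^{-\alpha}e^{2\alpha u}e^{-(1+v/\rho)e^{u}}+\rho^{\alpha}e^{2\alpha u}e^{-(1+v\rho)e^{u}}}{\Gamma(2\alpha)\left[\dfrac{1}{\rho^{\alpha}(1+v/\rho)^{2\alpha}}+\dfrac{\rho^{\alpha}}{(1+v\rho)^{2\alpha}}\right]},\qquad -\infty<u<\infty.$$ (ii) For $v\ge1$ and $\rho\in(0,1]$ define $$k_v(\rho)=\frac{(1+v\rho)^{2\alpha}\ln\left(1+\frac{v}{\rho}\right)+(\rho+v)^{2\alpha}\ln(1+v\rho)}{(1+v\rho)^{2\alpha}+(\rho+v)^{2\alpha}}.$$ Then for every $v$ with $1\le v\le\min\{1+\frac{1}{2\alpha},\,1+\sqrt3\}$, $\inf_{0<\rho\le1}k_v(\rho)=\ln(1+v)$.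
   Context: Fix a known $\alpha>0$. $X_1,X_2$ are independent, $X_i$ having density $f(x\mid\theta_i)=\frac{x^{\alpha-1}e^{-x/\theta_i}}{\Gamma(\alpha)\theta_i^{\alpha}}$, $x>0$, with unknown $\underline\theta=(\theta_1,\theta_2)\in(0,\infty)^2$. $Z_1=\min\{X_1,X_2\}$, $Z_2=\max\{X_1,X_2\}$. $H_M(\underline\theta)=\ln\theta_1\, I(X_1\le X_2)+\ln\theta_2\, I(X_1>X_2)$. *)

theory Defs
  imports "HOL-Probability.Probability"
begin

definition gamma_density :: "real \<Rightarrow> real \<Rightarrow> real \<Rightarrow> real" where
  "gamma_density \<alpha> \<theta> x =
     (if x > 0 then x powr (\<alpha> - 1) * exp (- x / \<theta>) / (Gamma \<alpha> * \<theta> powr \<alpha>) else 0)"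

definition H_M :: "real \<Rightarrow> real \<Rightarrow> real \<Rightarrow> real \<Rightarrow> real" where
  "H_M \<theta>1 \<theta>2 x1 x2 = (if x1 \<le> x2 then ln \<theta>1 else ln \<theta>2)"

definition rho_of :: "real \<Rightarrow> real \<Rightarrow> real" where
  "rho_of \<theta>1 \<theta>2 = min \<theta>1 \<theta>2 / max \<theta>1 \<theta>2"

definition cond_dens :: "real \<Rightarrow> real \<Rightarrow> real \<Rightarrow> real \<Rightarrow> real" where
  "cond_dens \<alpha> \<rho> v u =
     (\<rho> powr (-\<alpha>) * exp (2*\<alpha>*u) * exp (- (1 + v/\<rho>) * exp u)
       + \<rho> powr \<alpha> * exp (2*\<alpha>*u) * exp (- (1 + v * \<rho>) * exp u))
     / (Gamma (2*\<alpha>) * (1 / (\<rho> powr \<alpha> * (1 + v/\<rho>) powr (2*\<alpha>))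
                          + \<rho> powr \<alpha> / (1 + v * \<rho>) powr (2*\<alpha>)))"

definition k_fun :: "real \<Rightarrow> real \<Rightarrow> real \<Rightarrow> real" where
  "k_fun \<alpha> v \<rho> =
     ((1 + v * \<rho>) powr (2*\<alpha>) * ln (1 + v/\<rho>) + (\<rho> + v) powr (2*\<alpha>) * ln (1 + v * \<rho>))
     / ((1 + v * \<rho>) powr (2*\<alpha>) + (\<rho> + v) powr (2*\<alpha>))"

end

theory Submission
  imports Defs
begin


lemma SUP_indicator_eq:
  fixes S :: "nat \<Rightarrow> 'a set"
  assumes "x \<in> (\<Union>n. S n) \<longleftrightarrow> P"
  shows "(SUP n. (indicator (S n) x :: ennreal)) = (if P then 1 else 0)"
proof (cases P)
  case True
  then obtain n where n: "x \<in> S n" using assms by auto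
  have "(SUP n. (indicator (S n) x :: ennreal)) \<le> 1"
    by (intro SUP_least) (auto simp: indicator_def)
  moreover have "(1::ennreal) \<le> (SUP n. (indicator (S n) x :: ennreal))"
    using n by (intro SUP_upper2[of n]) auto
  ultimately show ?thesis using True by simp
next
  case False
  then show ?thesis using assms by (auto simp: indicator_def)
qed

lemma exp_subst:
  fixes f :: "real \<Rightarrow> ennreal" and c :: real
  assumes f[measurable]: "f \<in> borel_measurable borel" and c: "c > 0"
  shows "(\<integral>\<^sup>+x. f x * indicator {0<..} x \<partial>lborel) = (\<integral>\<^sup>+u. f (c * exp u) * ennreal (c * exp u) \<partial>lborel)"
proof -
  define S where "S n = {c * exp (- (real n + 1)) .. c * exp (real n + 1)}" for n :: nat
  define T where "T n = {- (real n + 1) .. real n + 1}" for n :: nat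
  have step: "(\<integral>\<^sup>+x. f x * indicator (S n) x \<partial>lborel) = (\<integral>\<^sup>+u. f (c * exp u) * ennreal (c * exp u) * indicator (T n) u \<partial>lborel)" for n
    unfolding S_def T_def
    by (rule nn_integral_substitution_aux[where g = "\<lambda>u. c * exp u" and g' = "\<lambda>u. c * exp u"])
       (auto intro!: derivative_eq_intros continuous_intros simp: c less_imp_le)
  have incS: "incseq S" unfolding S_def incseq_def
    using c by (auto simp: mult_le_cancel_left_pos)
  have incT: "incseq T" unfolding T_def incseq_def by auto
  have US: "x \<in> (\<Union>n. S n) \<longleftrightarrow> x \<in> {0<..}" for x
  proof
    assume "x \<in> (\<Union>n. S n)"
    then obtain n where "x \<in> S n" by auto
    then have "c * exp (- (real n + 1)) \<le> x" unfolding S_def by auto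
    moreover have "0 < c * exp (- (real n + 1))" using c by simp
    ultimately show "x \<in> {0<..}" by simp
  next
    assume "x \<in> {0<..}"
    then have x: "x > 0" by simp
    obtain n :: nat where n: "\<bar>ln (x / c)\<bar> \<le> real n" using real_arch_simple by blast
    have "c * exp (- (real n + 1)) \<le> x"
    proof -
      have "- (real n + 1) \<le> ln (x / c)" using n by linarith
      then have "exp (- (real n + 1)) \<le> x / c" using x c by (metis exp_ln exp_le_cancel_iff divide_pos_pos)
      then show ?thesis using c by (simp add: field_simps)
    qed
    moreover have "x \<le> c * exp (real n + 1)"
    proof -
      have "ln (x / c) \<le> real n + 1" using n by linarith
      then have "x / c \<le> exp (real n + 1)" using x c by (metis exp_ln exp_le_cancel_iff divide_pos_pos)
      then show ?thesis using c by (simp add: field_simps)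
    qed
    ultimately show "x \<in> (\<Union>n. S n)" unfolding S_def by auto
  qed
  have UT: "x \<in> (\<Union>n. T n) \<longleftrightarrow> True" for x
  proof -
    obtain n :: nat where n: "\<bar>x\<bar> \<le> real n" using real_arch_simple by blast
    then have "x \<in> T n" unfolding T_def by auto
    then show ?thesis by auto
  qed
  have "(\<integral>\<^sup>+x. f x * indicator {0<..} x \<partial>lborel) = (\<integral>\<^sup>+x. (SUP n. f x * indicator (S n) x) \<partial>lborel)"
  proof (intro nn_integral_cong)
    fix x
    have "(SUP n. f x * indicator (S n) x) = f x * (SUP n. indicator (S n) x)"
      by (rule SUP_mult_left_ennreal[symmetric])
    also have "\<dots> = f x * indicator {0<..} x" unfolding SUP_indicator_eq[OF US]
      by (simp add: indicator_def)
    finally show "f x * indicator {0<..} x = (SUP n. f x * indicator (S n) x)" by simp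
  qed
  also have "\<dots> = (SUP n. (\<integral>\<^sup>+x. f x * indicator (S n) x \<partial>lborel))"
  proof (rule nn_integral_monotone_convergence_SUP)
    show "incseq (\<lambda>n x. f x * indicator (S n) x)"
      using incS by (auto simp: incseq_def le_fun_def intro!: mult_left_mono split: split_indicator)
    show "\<And>i. (\<lambda>x. f x * indicator (S i) x) \<in> borel_measurable lborel"
      unfolding S_def by measurable
  qed
  also have "\<dots> = (SUP n. (\<integral>\<^sup>+u. f (c * exp u) * ennreal (c * exp u) * indicator (T n) u \<partial>lborel))"
    by (simp add: step)
  also have "\<dots> = (\<integral>\<^sup>+u. (SUP n. f (c * exp u) * ennreal (c * exp u) * indicator (T n) u) \<partial>lborel)"
  proof (rule nn_integral_monotone_convergence_SUP[symmetric])
    show "incseq (\<lambda>n u. f (c * exp u) * ennreal (c * exp u) * indicator (T n) u)"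
      using incT by (auto simp: incseq_def le_fun_def intro!: mult_left_mono split: split_indicator)
    show "\<And>i. (\<lambda>u. f (c * exp u) * ennreal (c * exp u) * indicator (T i) u) \<in> borel_measurable lborel"
      unfolding T_def by measurable
  qed
  also have "\<dots> = (\<integral>\<^sup>+u. f (c * exp u) * ennreal (c * exp u) \<partial>lborel)"
  proof (intro nn_integral_cong)
    fix u
    have "(SUP n. f (c * exp u) * ennreal (c * exp u) * indicator (T n) u) = f (c * exp u) * ennreal (c * exp u) * (SUP n. indicator (T n) u)"
      by (rule SUP_mult_left_ennreal[symmetric])
    also have "\<dots> = f (c * exp u) * ennreal (c * exp u)" unfolding SUP_indicator_eq[OF UT] by simp
    finally show "(SUP n. f (c * exp u) * ennreal (c * exp u) * indicator (T n) u) = f (c * exp u) * ennreal (c * exp u)" .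
  qed
  finally show ?thesis .
qed

lemma gamma_exp_int:
  fixes a s :: real assumes a: "a > 0" and s: "s > 0"
  shows "(\<integral>\<^sup>+u. ennreal (exp (s * u) * exp (- (a * exp u))) \<partial>lborel) = ennreal (Gamma s / a powr s)"
proof -
  define f where "f t = ennreal (a powr (-s) * t powr (s - 1) / exp t)" for t
  have fm[measurable]: "f \<in> borel_measurable borel" unfolding f_def by measurable
  have "ennreal (Gamma s / a powr s) = ennreal (a powr (-s)) * ennreal (Gamma s)"
    using a Gamma_real_pos[OF s] by (simp add: ennreal_mult[symmetric] powr_minus divide_inverse mult.commute)
  also have "\<dots> = ennreal (a powr (-s)) * (\<integral>\<^sup>+t. ennreal (indicator {0..} t * t powr (s - 1) / exp t) \<partial>lborel)"
    using Gamma_conv_nn_integral_real[OF s] by simp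
  also have "\<dots> = (\<integral>\<^sup>+t. ennreal (a powr (-s)) * ennreal (indicator {0..} t * t powr (s - 1) / exp t) \<partial>lborel)"
    by (rule nn_integral_cmult[symmetric]) measurable
  also have "\<dots> = (\<integral>\<^sup>+t. f t * indicator {0<..} t \<partial>lborel)"
    by (intro nn_integral_cong) (auto simp: f_def ennreal_mult[symmetric] indicator_def)
  also have "\<dots> = (\<integral>\<^sup>+u. f (a * exp u) * ennreal (a * exp u) \<partial>lborel)"
    by (rule exp_subst[OF fm a])
  also have "\<dots> = (\<integral>\<^sup>+u. ennreal (exp (s * u) * exp (- (a * exp u))) \<partial>lborel)"
  proof (intro nn_integral_cong)
    fix u :: real
    have pos: "a * exp u > 0" using a by simp
    have "(a * exp u) powr (s - 1) * (a * exp u) = (a * exp u) powr s"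
      using pos powr_add[of "a * exp u" "s - 1" 1] by simp
    also have "\<dots> = a powr s * exp (s * u)"
      using a by (simp add: powr_def ln_mult exp_add[symmetric] algebra_simps)
    finally have eq1: "(a * exp u) powr (s - 1) * (a * exp u) = a powr s * exp (s * u)" .
    have "a powr (-s) * (a * exp u) powr (s - 1) / exp (a * exp u) * (a * exp u)
          = a powr (-s) * a powr s * exp (s * u) / exp (a * exp u)"
      using eq1 by (simp add: algebra_simps)
    also have "\<dots> = exp (s * u) * exp (- (a * exp u))"
      using a by (simp add: powr_add[symmetric] exp_minus divide_inverse)
    finally have eq2: "a powr (-s) * (a * exp u) powr (s - 1) / exp (a * exp u) * (a * exp u) = exp (s * u) * exp (- (a * exp u))" .
    show "f (a * exp u) * ennreal (a * exp u) = ennreal (exp (s * u) * exp (- (a * exp u)))"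
      unfolding f_def using pos eq2 by (simp add: ennreal_mult[symmetric])
  qed
  finally show ?thesis by simp
qed

lemma gamma_density_nonneg:
  assumes "\<alpha> > 0" "\<theta> > 0" shows "gamma_density \<alpha> \<theta> x \<ge> 0"
  using assms unfolding gamma_density_def by auto

lemma gamma_density_nonpos: "x \<le> 0 \<Longrightarrow> gamma_density \<alpha> \<theta> x = 0"
  unfolding gamma_density_def by auto

lemma gamma_density_measurable[measurable]: "(\<lambda>x. gamma_density \<alpha> \<theta> x) \<in> borel_measurable borel"
  unfolding gamma_density_def by measurable

definition Jf :: "real \<Rightarrow> real \<Rightarrow> real \<Rightarrow> real \<Rightarrow> real \<Rightarrow> real" where
  "Jf \<alpha> \<theta>a \<theta>b u v = gamma_density \<alpha> \<theta>a (\<theta>a * exp u) * gamma_density \<alpha> \<theta>b (\<theta>a * exp u * v) * (\<theta>a * exp u) * (\<theta>a * exp u)"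

lemma gen_transform:
  fixes G :: "real \<Rightarrow> real \<Rightarrow> ennreal"
  assumes G[measurable]: "case_prod G \<in> borel_measurable (borel \<Otimes>\<^sub>M borel)"
    and a: "\<alpha> > 0" and ta: "\<theta>a > 0" and tb: "\<theta>b > 0"
  shows "(\<integral>\<^sup>+x. \<integral>\<^sup>+y. G (ln x - ln \<theta>a) (y / x) * ennreal (gamma_density \<alpha> \<theta>a x * gamma_density \<alpha> \<theta>b y) \<partial>lborel \<partial>lborel)
       = (\<integral>\<^sup>+v. \<integral>\<^sup>+u. G u v * ennreal (Jf \<alpha> \<theta>a \<theta>b u v) \<partial>lborel \<partial>lborel)"
proof -
  note nn = gamma_density_nonneg[OF a ta] gamma_density_nonneg[OF a tb]
  have step1: "(\<integral>\<^sup>+y. G (ln x - ln \<theta>a) (y / x) * ennreal (gamma_density \<alpha> \<theta>a x * gamma_density \<alpha> \<theta>b y) \<partial>lborel)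
      = (\<integral>\<^sup>+v. G (ln x - ln \<theta>a) v * ennreal (gamma_density \<alpha> \<theta>a x * gamma_density \<alpha> \<theta>b (x * v) * x) \<partial>lborel)" for x
  proof (cases "x > 0")
    case False
    then show ?thesis by (simp add: gamma_density_nonpos)
  next
    case True
    have "(\<integral>\<^sup>+y. G (ln x - ln \<theta>a) (y / x) * ennreal (gamma_density \<alpha> \<theta>a x * gamma_density \<alpha> \<theta>b y) \<partial>lborel)
        = ennreal \<bar>x\<bar> * (\<integral>\<^sup>+v. G (ln x - ln \<theta>a) ((0 + x * v) / x) * ennreal (gamma_density \<alpha> \<theta>a x * gamma_density \<alpha> \<theta>b (0 + x * v)) \<partial>lborel)"
      using True by (intro nn_integral_real_affine) auto
    also have "\<dots> = (\<integral>\<^sup>+v. ennreal x * (G (ln x - ln \<theta>a) v * ennreal (gamma_density \<alpha> \<theta>a x * gamma_density \<alpha> \<theta>b (x * v))) \<partial>lborel)"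
      using True by (subst nn_integral_cmult[symmetric]) auto
    also have "\<dots> = (\<integral>\<^sup>+v. G (ln x - ln \<theta>a) v * ennreal (gamma_density \<alpha> \<theta>a x * gamma_density \<alpha> \<theta>b (x * v) * x) \<partial>lborel)"
    proof (intro nn_integral_cong)
      fix v
      have "ennreal x * ennreal (gamma_density \<alpha> \<theta>a x * gamma_density \<alpha> \<theta>b (x * v))
          = ennreal (gamma_density \<alpha> \<theta>a x * gamma_density \<alpha> \<theta>b (x * v) * x)"
        using True by (simp add: ennreal_mult'[symmetric] mult.commute)
      then show "ennreal x * (G (ln x - ln \<theta>a) v * ennreal (gamma_density \<alpha> \<theta>a x * gamma_density \<alpha> \<theta>b (x * v)))
          = G (ln x - ln \<theta>a) v * ennreal (gamma_density \<alpha> \<theta>a x * gamma_density \<alpha> \<theta>b (x * v) * x)"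
        by (metis mult.left_commute)
    qed
    finally show ?thesis .
  qed
  have "(\<integral>\<^sup>+x. \<integral>\<^sup>+y. G (ln x - ln \<theta>a) (y / x) * ennreal (gamma_density \<alpha> \<theta>a x * gamma_density \<alpha> \<theta>b y) \<partial>lborel \<partial>lborel)
      = (\<integral>\<^sup>+x. \<integral>\<^sup>+v. G (ln x - ln \<theta>a) v * ennreal (gamma_density \<alpha> \<theta>a x * gamma_density \<alpha> \<theta>b (x * v) * x) \<partial>lborel \<partial>lborel)"
    by (simp add: step1)
  also have "\<dots> = (\<integral>\<^sup>+v. \<integral>\<^sup>+x. G (ln x - ln \<theta>a) v * ennreal (gamma_density \<alpha> \<theta>a x * gamma_density \<alpha> \<theta>b (x * v) * x) \<partial>lborel \<partial>lborel)"
    by (rule lborel_pair.Fubini'[symmetric]) measurable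
  also have "\<dots> = (\<integral>\<^sup>+v. \<integral>\<^sup>+u. G u v * ennreal (Jf \<alpha> \<theta>a \<theta>b u v) \<partial>lborel \<partial>lborel)"
  proof (rule nn_integral_cong)
    fix v :: real
    define \<phi> where "\<phi> = (\<lambda>x. G (ln x - ln \<theta>a) v * ennreal (gamma_density \<alpha> \<theta>a x * gamma_density \<alpha> \<theta>b (x * v) * x))"
    have \<phi>m[measurable]: "\<phi> \<in> borel_measurable borel" unfolding \<phi>_def by measurable
    have "(\<integral>\<^sup>+x. \<phi> x \<partial>lborel) = (\<integral>\<^sup>+x. \<phi> x * indicator {0<..} x \<partial>lborel)"
      by (intro nn_integral_cong) (auto simp: \<phi>_def gamma_density_nonpos indicator_def)
    also have "\<dots> = (\<integral>\<^sup>+u. \<phi> (\<theta>a * exp u) * ennreal (\<theta>a * exp u) \<partial>lborel)"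
      by (rule exp_subst[OF \<phi>m ta])
    also have "\<dots> = (\<integral>\<^sup>+u. G u v * ennreal (Jf \<alpha> \<theta>a \<theta>b u v) \<partial>lborel)"
    proof (intro nn_integral_cong)
      fix u :: real
      have pos: "\<theta>a * exp u > 0" using ta by simp
      have l: "ln (\<theta>a * exp u) - ln \<theta>a = u" using ta by (simp add: ln_mult)
      show "\<phi> (\<theta>a * exp u) * ennreal (\<theta>a * exp u) = G u v * ennreal (Jf \<alpha> \<theta>a \<theta>b u v)"
      proof -
        define y where "y = \<theta>a * exp u"
        define P where "P = gamma_density \<alpha> \<theta>a y * gamma_density \<alpha> \<theta>b (y * v)"
        have "ennreal (P * y * y) = ennreal (P * y) * ennreal y"
          using pos unfolding y_def by (intro ennreal_mult'') simp
        then show ?thesis unfolding \<phi>_def Jf_def l y_def[symmetric] P_def[symmetric]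
          using l unfolding y_def[symmetric] by (simp add: mult.assoc)
      qed
    qed
    finally show "(\<integral>\<^sup>+x. G (ln x - ln \<theta>a) v * ennreal (gamma_density \<alpha> \<theta>a x * gamma_density \<alpha> \<theta>b (x * v) * x) \<partial>lborel) = (\<integral>\<^sup>+u. G u v * ennreal (Jf \<alpha> \<theta>a \<theta>b u v) \<partial>lborel)"
      unfolding \<phi>_def .
  qed
  finally show ?thesis .
qed

lemma core_transform:
  fixes G :: "real \<Rightarrow> real \<Rightarrow> ennreal"
  assumes G[measurable]: "case_prod G \<in> borel_measurable (borel \<Otimes>\<^sub>M borel)"
    and a: "\<alpha> > 0" and t1: "\<theta>1 > 0" and t2: "\<theta>2 > 0"
  shows "(\<integral>\<^sup>+x. \<integral>\<^sup>+y. G (ln (min x y) - H_M \<theta>1 \<theta>2 x y) (max x y / min x y)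
              * ennreal (gamma_density \<alpha> \<theta>1 x * gamma_density \<alpha> \<theta>2 y) \<partial>lborel \<partial>lborel)
       = (\<integral>\<^sup>+v. \<integral>\<^sup>+u. G u v * (indicator {1..} v * ennreal (Jf \<alpha> \<theta>1 \<theta>2 u v)
              + indicator {1<..} v * ennreal (Jf \<alpha> \<theta>2 \<theta>1 u v)) \<partial>lborel \<partial>lborel)"
proof -
  define G1 where "G1 = (\<lambda>u v. indicator {1..} v * G u v)"
  define G2 where "G2 = (\<lambda>u v. indicator {1<..} v * G u v)"
  have G1m[measurable]: "case_prod G1 \<in> borel_measurable (borel \<Otimes>\<^sub>M borel)" unfolding G1_def by measurable
  have G2m[measurable]: "case_prod G2 \<in> borel_measurable (borel \<Otimes>\<^sub>M borel)" unfolding G2_def by measurable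
  define g1 where "g1 = gamma_density \<alpha> \<theta>1"
  define g2 where "g2 = gamma_density \<alpha> \<theta>2"
  have split: "G (ln (min x y) - H_M \<theta>1 \<theta>2 x y) (max x y / min x y) * ennreal (g1 x * g2 y)
      = G1 (ln x - ln \<theta>1) (y / x) * ennreal (g1 x * g2 y) + G2 (ln y - ln \<theta>2) (x / y) * ennreal (g1 x * g2 y)" for x y
  proof (cases "x > 0 \<and> y > 0")
    case False
    then have z: "g1 x * g2 y = 0" unfolding g1_def g2_def by (auto simp: gamma_density_nonpos)
    show ?thesis unfolding z by simp
  next
    case True
    show ?thesis
    proof (cases "x \<le> y")
      case True
      with \<open>x > 0 \<and> y > 0\<close> have "1 \<le> y / x" "\<not> 1 < x / y" by (auto simp: field_simps)
      then show ?thesis using True by (simp add: G1_def G2_def H_M_def min_def max_def)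
    next
      case False
      with \<open>x > 0 \<and> y > 0\<close> have "\<not> 1 \<le> y / x" "1 < x / y" by (auto simp: field_simps)
      then show ?thesis using False by (simp add: G1_def G2_def H_M_def min_def max_def)
    qed
  qed
  have "(\<integral>\<^sup>+x. \<integral>\<^sup>+y. G (ln (min x y) - H_M \<theta>1 \<theta>2 x y) (max x y / min x y)
              * ennreal (g1 x * g2 y) \<partial>lborel \<partial>lborel)
      = (\<integral>\<^sup>+x. (\<integral>\<^sup>+y. G1 (ln x - ln \<theta>1) (y / x) * ennreal (g1 x * g2 y) \<partial>lborel)
           + (\<integral>\<^sup>+y. G2 (ln y - ln \<theta>2) (x / y) * ennreal (g1 x * g2 y) \<partial>lborel) \<partial>lborel)"
    unfolding split by (intro nn_integral_cong nn_integral_add) (auto simp: g1_def g2_def)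
  also have "\<dots> = (\<integral>\<^sup>+x. \<integral>\<^sup>+y. G1 (ln x - ln \<theta>1) (y / x) * ennreal (g1 x * g2 y) \<partial>lborel \<partial>lborel)
           + (\<integral>\<^sup>+x. \<integral>\<^sup>+y. G2 (ln y - ln \<theta>2) (x / y) * ennreal (g1 x * g2 y) \<partial>lborel \<partial>lborel)"
    by (rule nn_integral_add) (auto simp: g1_def g2_def)
  also have "(\<integral>\<^sup>+x. \<integral>\<^sup>+y. G1 (ln x - ln \<theta>1) (y / x) * ennreal (g1 x * g2 y) \<partial>lborel \<partial>lborel)
      = (\<integral>\<^sup>+v. \<integral>\<^sup>+u. G1 u v * ennreal (Jf \<alpha> \<theta>1 \<theta>2 u v) \<partial>lborel \<partial>lborel)"
    unfolding g1_def g2_def by (rule gen_transform[OF G1m a t1 t2])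
  also have "(\<integral>\<^sup>+x. \<integral>\<^sup>+y. G2 (ln y - ln \<theta>2) (x / y) * ennreal (g1 x * g2 y) \<partial>lborel \<partial>lborel)
      = (\<integral>\<^sup>+y. \<integral>\<^sup>+x. G2 (ln y - ln \<theta>2) (x / y) * ennreal (g2 y * g1 x) \<partial>lborel \<partial>lborel)"
    by (subst lborel_pair.Fubini') (auto simp: g1_def g2_def mult.commute)
  also have "\<dots> = (\<integral>\<^sup>+v. \<integral>\<^sup>+u. G2 u v * ennreal (Jf \<alpha> \<theta>2 \<theta>1 u v) \<partial>lborel \<partial>lborel)"
    unfolding g1_def g2_def by (rule gen_transform[OF G2m a t2 t1])
  also have "(\<integral>\<^sup>+v. \<integral>\<^sup>+u. G1 u v * ennreal (Jf \<alpha> \<theta>1 \<theta>2 u v) \<partial>lborel \<partial>lborel)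
      + (\<integral>\<^sup>+v. \<integral>\<^sup>+u. G2 u v * ennreal (Jf \<alpha> \<theta>2 \<theta>1 u v) \<partial>lborel \<partial>lborel)
      = (\<integral>\<^sup>+v. (\<integral>\<^sup>+u. G1 u v * ennreal (Jf \<alpha> \<theta>1 \<theta>2 u v) \<partial>lborel)
           + (\<integral>\<^sup>+u. G2 u v * ennreal (Jf \<alpha> \<theta>2 \<theta>1 u v) \<partial>lborel) \<partial>lborel)"
    by (rule nn_integral_add[symmetric]) (auto simp: Jf_def)
  also have "\<dots> = (\<integral>\<^sup>+v. \<integral>\<^sup>+u. G u v * (indicator {1..} v * ennreal (Jf \<alpha> \<theta>1 \<theta>2 u v)
              + indicator {1<..} v * ennreal (Jf \<alpha> \<theta>2 \<theta>1 u v)) \<partial>lborel \<partial>lborel)"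
  proof (rule nn_integral_cong)
    fix v :: real
    have "(\<integral>\<^sup>+u. G1 u v * ennreal (Jf \<alpha> \<theta>1 \<theta>2 u v) \<partial>lborel) + (\<integral>\<^sup>+u. G2 u v * ennreal (Jf \<alpha> \<theta>2 \<theta>1 u v) \<partial>lborel)
       = (\<integral>\<^sup>+u. G1 u v * ennreal (Jf \<alpha> \<theta>1 \<theta>2 u v) + G2 u v * ennreal (Jf \<alpha> \<theta>2 \<theta>1 u v) \<partial>lborel)"
      by (rule nn_integral_add[symmetric]) (auto simp: Jf_def)
    also have "\<dots> = (\<integral>\<^sup>+u. G u v * (indicator {1..} v * ennreal (Jf \<alpha> \<theta>1 \<theta>2 u v)
              + indicator {1<..} v * ennreal (Jf \<alpha> \<theta>2 \<theta>1 u v)) \<partial>lborel)"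
      by (intro nn_integral_cong) (simp add: G1_def G2_def distrib_left mult_ac)
    finally show "(\<integral>\<^sup>+u. G1 u v * ennreal (Jf \<alpha> \<theta>1 \<theta>2 u v) \<partial>lborel) + (\<integral>\<^sup>+u. G2 u v * ennreal (Jf \<alpha> \<theta>2 \<theta>1 u v) \<partial>lborel)
       = (\<integral>\<^sup>+u. G u v * (indicator {1..} v * ennreal (Jf \<alpha> \<theta>1 \<theta>2 u v)
              + indicator {1<..} v * ennreal (Jf \<alpha> \<theta>2 \<theta>1 u v)) \<partial>lborel)" .
  qed
  finally show ?thesis unfolding g1_def g2_def .
qed



lemma pade_ln_le:
  fixes x :: real assumes "1 \<le> x"
  shows "ln x \<le> (x - 1) * (x + 5) / (4 * x + 2)"
proof -
  define g where "g x = (x - 1) * (x + 5) / (4 * x + 2) - ln x" for x :: real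
  define g' where "g' x = ((2*x+4) * (4*x+2) - 4 * ((x - 1) * (x + 5))) / (4*x+2)^2 - 1/x" for x :: real
  have d: "(g has_real_derivative g' y) (at y)" if "y \<in> {1..x}" for y
  proof -
    from that have y: "y \<ge> 1" by auto
    have "((\<lambda>x. (x - 1) * (x + 5) / (4 * x + 2) - ln x) has_real_derivative
       (((1 * (y + 5) + (y - 1) * 1) * (4 * y + 2) - (y - 1) * (y + 5) * (4 * 1)) / (4 * y + 2)^2 - 1 / y)) (at y)"
      using y by (auto intro!: derivative_eq_intros simp: power2_eq_square)
    moreover have "(((1 * (y + 5) + (y - 1) * 1) * (4 * y + 2) - (y - 1) * (y + 5) * (4 * 1)) / (4 * y + 2)^2 - 1 / y) = g' y"
      unfolding g'_def by (simp add: algebra_simps)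
    ultimately show ?thesis unfolding g_def by simp
  qed
  have n: "g' y \<ge> 0" if "y \<in> {1..x}" for y
  proof -
    from that have y: "y \<ge> 1" by auto
    have "g' y = 4 * (y - 1)^3 / (y * (4*y+2)^2)"
    proof -
      have a: "4*y+2 \<noteq> 0" "y \<noteq> 0" using y by auto
      show ?thesis unfolding g'_def using a
        by (simp add: divide_simps) (simp add: algebra_simps power2_eq_square power3_eq_cube)
    qed
    also have "\<dots> \<ge> 0" using y by simp
    finally show ?thesis .
  qed
  have "g 1 \<le> g x" by (rule deriv_nonneg_imp_mono[OF d n assms])
  then show ?thesis by (simp add: g_def)
qed

lemma exp_le_ratio:
  fixes y :: real assumes "0 \<le> y" "y < 1"
  shows "exp (2 * y) \<le> (1 + y) / (1 - y)"
proof -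
  define g where "g x = ln (1 + x) - ln (1 - x) - 2 * x" for x :: real
  have d: "(g has_real_derivative (1/(1+x) + 1/(1-x) - 2)) (at x)" if "x \<in> {0..y}" for x
    using that assms unfolding g_def by (auto intro!: derivative_eq_intros)
  have n: "1/(1+x) + 1/(1-x) - 2 \<ge> 0" if "x \<in> {0..y}" for x
  proof -
    from that assms have x: "0 \<le> x" "x < 1" by auto
    have "1/(1+x) + 1/(1-x) - 2 = 2 * x^2/((1+x) * (1-x))" using x
      by (simp add: divide_simps) (simp add: algebra_simps power2_eq_square)
    also have "\<dots> \<ge> 0" using x by simp
    finally show ?thesis .
  qed
  have "g 0 \<le> g y" by (rule deriv_nonneg_imp_mono[OF d n assms(1)])
  then have "2 * y \<le> ln ((1+y)/(1-y))" using assms by (simp add: g_def ln_div)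
  then have "exp (2 * y) \<le> exp (ln ((1+y)/(1-y)))" by simp
  also have "\<dots> = (1+y)/(1-y)" using assms by simp
  finally show ?thesis .
qed

definition Ufun :: "real \<Rightarrow> real" where "Ufun x = (x - 1) * (x + 5) / (4 * x + 2)"

lemma poly_part:
  fixes t v :: real assumes t: "0 < t" "t \<le> 1" and v: "1 \<le> v" "v \<le> 11/4"
  shows "2 * (v-1) * (1/(t+v) - 1/t + v/(1+v * t)) + (1/t + v/(1+v * t) - 1/(t+v)) * Ufun ((t+v)/(1+v * t))
          + (v/(1+v * t) - 1/(t+v)) * Ufun ((t+v)/(t * (1+v * t))) \<le> 0"
proof -
  define P3 where "P3 = -6 * v + 22 * v^2 - 4 * v^3 - 18 * t + 32 * t * v + 12 * t * v^2 + 10 * t * v^3 - 6 * t^2 + 32 * t^2 * v^2 + 10 * t^2 * v^3 - 2 * t^3 * v + 6 * t^3 * v^2 + 8 * t^3 * v^3"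
  define N where "N = t + v"
  define Dn where "Dn = 1 + v * t"
  have Np: "N > 0" and Dp: "Dn > 0" using t v by (auto simp: N_def Dn_def intro: add_pos_nonneg)
  have c0: "2 * v * (11 * v - 3 - 2 * v^2) \<ge> 0"
  proof -
    have "(v-1) * (11/4 - v) \<ge> 0" using v by simp
    moreover have "11 * v - 3 - 2 * v^2 = 2 * ((v-1) * (11/4 - v)) + 7/2 * v + 5/2"
      by (simp add: field_simps power2_eq_square)
    ultimately have "11 * v - 3 - 2 * v^2 \<ge> 0" using v by linarith
    then show ?thesis using v by simp
  qed
  have v2: "1 \<le> v^2" and v3: "1 \<le> v^3" using v by (simp_all add: one_le_power)
  have c1: "-18+32 * v+12 * v^2+10 * v^3 \<ge> 0" using v v2 v3 by linarith
  have c2: "-6+32 * v^2+10 * v^3 \<ge> 0" using v v2 v3 by linarith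
  have c3: "v * (-2+6 * v+8 * v^2) \<ge> 0" using v v2 by (intro mult_nonneg_nonneg) auto
  have "P3 = 2 * v * (11 * v - 3 - 2 * v^2) + t * (-18+32 * v+12 * v^2+10 * v^3) + t^2 * (-6+32 * v^2+10 * v^3) + t^2 * (t * (v * (-2+6 * v+8 * v^2)))"
    unfolding P3_def by (simp add: algebra_simps power2_eq_square power3_eq_cube)
  also have "\<dots> \<ge> 0"
  proof -
    have "t * (-18+32 * v+12 * v^2+10 * v^3) \<ge> 0" using c1 t by simp
    moreover have "t^2 * (-6+32 * v^2+10 * v^3) \<ge> 0" using c2 by simp
    moreover have "t^2 * (t * (v * (-2+6 * v+8 * v^2))) \<ge> 0" using c3 t by simp
    ultimately show ?thesis using c0 by linarith
  qed
  finally have P3p: "P3 \<ge> 0" .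
  have A: "4 * N + 2 * Dn > 0" using Np Dp t by auto
  have "t * Dn > 0" using Dp t by simp
  then have B: "4 * N + 2 * t * Dn > 0" using Np by linarith
  have eq: "2 * (v-1) * (1/(t+v) - 1/t + v/(1+v * t)) + (1/t + v/(1+v * t) - 1/(t+v)) * Ufun ((t+v)/(1+v * t))
          + (v/(1+v * t) - 1/(t+v)) * Ufun ((t+v)/(t * (1+v * t)))
        = - ((1-t)^3 * (v-1) * v * P3) / (t * N * Dn * Dn * (4 * N+2 * Dn) * (4 * N+2 * t * Dn))"
    using Np Dp A B t unfolding Ufun_def N_def[symmetric] Dn_def[symmetric]
    apply (simp add: divide_simps)
    apply (simp add: P3_def N_def Dn_def algebra_simps power2_eq_square power3_eq_cube)
    done
  have "(1-t)^3 * (v-1) * v * P3 / (t * N * Dn * Dn * (4 * N+2 * Dn) * (4 * N+2 * t * Dn)) \<ge> 0"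
    using t v P3p Np Dp A B by (intro divide_nonneg_pos mult_nonneg_nonneg mult_pos_pos) auto
  then show ?thesis unfolding eq by simp
qed

lemma K_nonneg:
  fixes r v :: real assumes r: "0 < r" "r \<le> 1" and v: "1 \<le> v" "v \<le> 11/4"
  shows "(ln (r + v) - ln r - ln (1 + v * r)) * (ln (r + v) - ln (1 + v * r))
          \<le> 2 * (v - 1) * (ln (r + v) - ln r + ln (1 + v * r) - 2 * ln (1 + v))"
proof -
  define K where "K t = 2 * (v - 1) * (ln (t + v) - ln t + ln (1 + v * t) - 2 * ln (1 + v))
     - (ln (t + v) - ln t - ln (1 + v * t)) * (ln (t + v) - ln (1 + v * t))" for t
  define K' where "K' t = 2 * (v - 1) * (1/(t+v) - 1/t + v/(1+v * t))
     - ((1/(t+v) - 1/t - v/(1+v * t)) * (ln (t + v) - ln (1 + v * t))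
        + (ln (t + v) - ln t - ln (1 + v * t)) * (1/(t+v) - v/(1+v * t)))" for t
  have d: "(K has_real_derivative K' t) (at t)" if "t \<in> {r..1}" for t
  proof -
    have t: "0 < t" using that r by auto
    have "0 < 1 + v * t" using t v by (simp add: add_pos_nonneg)
    then show ?thesis unfolding K_def K'_def using t v
      by (auto intro!: derivative_eq_intros)
  qed
  have n: "K' t \<le> 0" if "t \<in> {r..1}" for t
  proof -
    have t: "0 < t" "t \<le> 1" using that r by auto
    have Dp: "0 < 1 + v * t" using t v by (simp add: add_pos_nonneg)
    have Np: "0 < t + v" using t v by simp
    define q where "q = (t + v) / (1 + v * t)"
    define x where "x = (t + v) / (t * (1 + v * t))"
    have q1: "1 \<le> q"
    proof -
      have "(1 - t) * (v - 1) \<ge> 0" using t v by simp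
      then have "1 + v * t \<le> t + v" by (simp add: algebra_simps)
      then show ?thesis unfolding q_def using Dp by simp
    qed
    have x1: "1 \<le> x"
    proof -
      have "t * t \<le> 1" using t by (simp add: mult_le_one)
      then have "v * (t * t) \<le> v" using v by (simp add: mult_left_le)
      then have "t * (1 + v * t) \<le> t + v" by (simp add: algebra_simps)
      then show ?thesis unfolding x_def using Dp t by simp
    qed
    have R: "ln (t + v) - ln (1 + v * t) = ln q" unfolding q_def using Dp Np by (simp add: ln_div)
    have Q: "ln (t + v) - ln t - ln (1 + v * t) = ln x" unfolding x_def using Dp Np t
      by (simp add: ln_div ln_mult)
    have c1: "0 \<le> 1/t + v/(1+v * t) - 1/(t+v)"
    proof -
      have "1/(t+v) \<le> 1/t" using t v by (simp add: frac_le)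
      moreover have "0 \<le> v/(1+v * t)" using v Dp by simp
      ultimately show ?thesis by linarith
    qed
    have c2: "0 \<le> v/(1+v * t) - 1/(t+v)"
    proof -
      have "1 \<le> v * v" using v by (metis mult_mono one_le_power power2_eq_square v(1) zero_le_one)
      then have "1 + v * t \<le> v * (t + v)" by (simp add: algebra_simps)
      then have "1/(t+v) \<le> v/(1+v * t)" using Dp Np by (simp add: divide_simps)
      then show ?thesis by simp
    qed
    have "K' t = 2 * (v - 1) * (1/(t+v) - 1/t + v/(1+v * t)) + (1/t + v/(1+v * t) - 1/(t+v)) * ln q
          + (v/(1+v * t) - 1/(t+v)) * ln x"
      unfolding K'_def R Q by (simp add: algebra_simps)
    also have "\<dots> \<le> 2 * (v - 1) * (1/(t+v) - 1/t + v/(1+v * t)) + (1/t + v/(1+v * t) - 1/(t+v)) * Ufun q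
          + (v/(1+v * t) - 1/(t+v)) * Ufun x"
      using c1 c2 pade_ln_le[OF q1] pade_ln_le[OF x1] unfolding Ufun_def
      by (intro add_mono mult_left_mono order.refl) auto
    also have "\<dots> \<le> 0" unfolding q_def x_def by (rule poly_part[OF t v])
    finally show ?thesis .
  qed
  have "K 1 \<le> K r" by (rule deriv_nonpos_imp_antimono[OF d n r(2)])
  moreover have "K 1 = 0" unfolding K_def by (simp add: add.commute)
  ultimately show ?thesis unfolding K_def by linarith
qed

lemma k_ge:
  fixes \<alpha> v r :: real
  assumes a: "\<alpha> > 0" and r: "0 < r" "r \<le> 1" and v: "1 \<le> v" "v \<le> 1 + 1 / (2 * \<alpha>)" "v \<le> 1 + sqrt 3"
  shows "ln (1 + v) \<le> k_fun \<alpha> v r"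
proof -
  have s3: "sqrt 3 \<le> 7/4" by (rule real_le_lsqrt) (auto simp: power2_eq_square)
  have v': "v \<le> 11/4" using v s3 by linarith
  have Dp: "0 < 1 + v * r" using r v by (simp add: add_pos_nonneg)
  have Np: "0 < r + v" using r v by simp
  define A where "A = (1 + v * r) powr (2 * \<alpha>)"
  define B where "B = (r + v) powr (2 * \<alpha>)"
  define La where "La = ln (r + v) - ln r"
  define Lb where "Lb = ln (1 + v * r)"
  define c where "c = ln (1 + v)"
  define d where "d = ln (r + v) - ln (1 + v * r)"
  have Ap: "A > 0" unfolding A_def using Dp by simp
  have La_eq: "ln (1 + v / r) = La"
  proof -
    have "1 + v / r = (r + v) / r" using r by (simp add: field_simps)
    then show ?thesis unfolding La_def using Np r by (simp add: ln_div)
  qed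
  have BA: "B = A * exp (2 * (\<alpha> * d))"
    unfolding A_def B_def d_def powr_def using Dp Np
    by (simp add: exp_add[symmetric] algebra_simps)
  have E2: "0 \<le> La + Lb - 2 * c"
  proof -
    have "r * (1 + v)^2 \<le> (r + v) * (1 + v * r)"
    proof -
      have "0 \<le> v * (1 - r)^2" using v by simp
      then show ?thesis by (simp add: algebra_simps power2_eq_square)
    qed
    then have "(1 + v)^2 \<le> (r + v) * (1 + v * r) / r" using r by (simp add: field_simps)
    then have "ln ((1 + v)^2) \<le> ln ((r + v) * (1 + v * r) / r)"
      using v Dp Np r by (subst ln_le_cancel_iff) auto
    then show ?thesis unfolding La_def Lb_def c_def using Dp Np r v
      by (simp add: ln_div ln_mult ln_realpow)
  qed
  have Qd: "0 \<le> La - Lb"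
  proof -
    have "r * (1 + v * r) \<le> r + v"
    proof -
      have "r * r \<le> 1" using r by (simp add: mult_le_one)
      then have "v * (r * r) \<le> v" using v by (simp add: mult_left_le)
      then show ?thesis by (simp add: algebra_simps)
    qed
    then have "ln (r * (1 + v * r)) \<le> ln (r + v)" using r Dp Np by (subst ln_le_cancel_iff) auto
    then show ?thesis unfolding La_def Lb_def using r Dp by (simp add: ln_mult)
  qed
  have d0: "0 \<le> d"
  proof -
    have "(1 - r) * (v - 1) \<ge> 0" using r v by simp
    then have "1 + v * r \<le> r + v" by (simp add: algebra_simps)
    then show ?thesis unfolding d_def using Dp by (simp add: ln_le_cancel_iff)
  qed
  have key: "(La - Lb) * d \<le> 2 * (v - 1) * (La + Lb - 2 * c)"
    using K_nonneg[OF r v(1) v'] unfolding La_def Lb_def c_def d_def by (simp add: algebra_simps)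
  define y where "y = \<alpha> * d"
  have y0: "0 \<le> y" unfolding y_def using a d0 by simp
  have yQ: "y * (La - Lb) \<le> La + Lb - 2 * c"
  proof -
    have "2 * \<alpha> * (v - 1) \<le> 1"
    proof -
      have "v - 1 \<le> 1 / (2 * \<alpha>)" using v by simp
      then show ?thesis using a by (simp add: field_simps)
    qed
    have "y * (La - Lb) = \<alpha> * ((La - Lb) * d)" unfolding y_def by simp
    also have "\<dots> \<le> \<alpha> * (2 * (v - 1) * (La + Lb - 2 * c))" using key a by (simp add: mult_left_mono)
    also have "\<dots> = (2 * \<alpha> * (v - 1)) * (La + Lb - 2 * c)" by simp
    also have "\<dots> \<le> 1 * (La + Lb - 2 * c)" using \<open>2 * \<alpha> * (v - 1) \<le> 1\<close> E2 by (intro mult_right_mono) auto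
    finally show ?thesis by simp
  qed
  define E where "E = La + Lb - 2 * c"
  define H where "H = La - Lb"
  have main: "0 \<le> (E + H) + exp (2 * y) * (E - H)"
  proof (cases "H \<le> E")
    case True
    then show ?thesis using E2 Qd unfolding E_def H_def by simp
  next
    case False
    then have HE: "E < H" by simp
    have E0: "0 \<le> E" using E2 unfolding E_def .
    then have Hp: "0 < H" using HE by linarith
    have yl: "y * H \<le> E" using yQ unfolding E_def H_def by simp
    have y1: "y < 1"
    proof -
      have "y * H < 1 * H" using yl HE by simp
      then show ?thesis using Hp by simp
    qed
    have "exp (2 * y) * (H - E) \<le> (1 + y) / (1 - y) * (H - E)"
      using exp_le_ratio[OF y0 y1] HE by (intro mult_right_mono) auto
    also have "\<dots> \<le> E + H"
    proof -
      have "(1 + y) * (H - E) \<le> (E + H) * (1 - y)" using yl by (simp add: algebra_simps)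
      then show ?thesis using y1 by (simp add: divide_simps)
    qed
    finally show ?thesis by (simp add: algebra_simps)
  qed
  have num: "c * (A + B) \<le> A * La + B * Lb"
  proof -
    have "A * La + B * Lb - c * (A + B) = A / 2 * ((E + H) + exp (2 * y) * (E - H))"
      unfolding BA E_def H_def y_def by (simp add: algebra_simps)
    also have "\<dots> \<ge> 0" using Ap main by simp
    finally show ?thesis by simp
  qed
  have "k_fun \<alpha> v r = (A * La + B * Lb) / (A + B)"
    unfolding k_fun_def A_def[symmetric] B_def[symmetric] La_eq Lb_def[symmetric] by simp
  moreover have "A + B > 0" using Ap BA by (simp add: add_pos_pos)
  ultimately show ?thesis using num unfolding c_def by (simp add: pos_le_divide_eq)
qed

lemma part2:
  fixes \<alpha> :: real assumes a: "\<alpha> > 0"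
  shows "\<forall>v::real. 1 \<le> v \<and> v \<le> min (1 + 1 / (2*\<alpha>)) (1 + sqrt 3) \<longrightarrow>
          (INF \<rho>\<in>{0<..1}. k_fun \<alpha> v \<rho>) = ln (1 + v)"
proof (intro allI impI)
  fix v :: real assume v: "1 \<le> v \<and> v \<le> min (1 + 1 / (2*\<alpha>)) (1 + sqrt 3)"
  have k1: "k_fun \<alpha> v 1 = ln (1 + v)"
  proof -
    have "(1 + v) powr (2 * \<alpha>) > 0" using v by simp
    then show ?thesis unfolding k_fun_def by (simp add: add.commute field_simps)
  qed
  show "(INF \<rho>\<in>{0<..1}. k_fun \<alpha> v \<rho>) = ln (1 + v)"
    unfolding k1[symmetric]
  proof (rule cInf_eq_minimum)
    show "k_fun \<alpha> v 1 \<in> k_fun \<alpha> v ` {0<..1}" by auto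
  next
    fix x assume "x \<in> k_fun \<alpha> v ` {0<..1}"
    then obtain r where r: "0 < r" "r \<le> 1" and x: "x = k_fun \<alpha> v r" by auto
    show "k_fun \<alpha> v 1 \<le> x" unfolding x k1 using k_ge[OF a r] v by auto
  qed
qed



lemma cond_int_one:
  fixes \<alpha> \<rho> v :: real assumes a: "\<alpha> > 0" and r: "\<rho> > 0" and v: "v > 0"
  shows "(\<integral>\<^sup>+u. ennreal (cond_dens \<alpha> \<rho> v u) \<partial>lborel) = 1"
proof -
  define a1 where "a1 = 1 + v / \<rho>"
  define a2 where "a2 = 1 + v * \<rho>"
  have a1p: "a1 > 0" unfolding a1_def using r v by (simp add: add_pos_pos)
  have a2p: "a2 > 0" unfolding a2_def using r v by (simp add: add_pos_pos)
  define f where "f a u = exp (2 * \<alpha> * u) * exp (- (a * exp u))" for a u :: real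
  define Den where "Den = Gamma (2 * \<alpha>) * (1 / (\<rho> powr \<alpha> * a1 powr (2 * \<alpha>)) + \<rho> powr \<alpha> / a2 powr (2 * \<alpha>))"
  have g2: "Gamma (2 * \<alpha>) > 0" using a by simp
  have Denp: "Den > 0" unfolding Den_def using g2 r a1p a2p by (intro mult_pos_pos add_pos_pos) auto
  have cd: "cond_dens \<alpha> \<rho> v u = (\<rho> powr (-\<alpha>) * f a1 u + \<rho> powr \<alpha> * f a2 u) / Den" for u
    unfolding cond_dens_def Den_def f_def a1_def a2_def by (simp add: algebra_simps)
  have int: "(\<integral>\<^sup>+u. ennreal (f a u) \<partial>lborel) = ennreal (Gamma (2 * \<alpha>) / a powr (2 * \<alpha>))" if "a > 0" for a
    unfolding f_def using gamma_exp_int[OF that, of "2 * \<alpha>"] a by simp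
  have fm[measurable]: "(\<lambda>u. f a u) \<in> borel_measurable borel" for a unfolding f_def by measurable
  have fnn: "f a u \<ge> 0" for a u unfolding f_def by simp
  have "(\<integral>\<^sup>+u. ennreal (cond_dens \<alpha> \<rho> v u) \<partial>lborel)
      = (\<integral>\<^sup>+u. ennreal (1 / Den) * (ennreal (\<rho> powr (-\<alpha>)) * ennreal (f a1 u) + ennreal (\<rho> powr \<alpha>) * ennreal (f a2 u)) \<partial>lborel)"
  proof (rule nn_integral_cong)
    fix u
    have "cond_dens \<alpha> \<rho> v u = 1 / Den * (\<rho> powr (-\<alpha>) * f a1 u + \<rho> powr \<alpha> * f a2 u)" unfolding cd by simp
    then show "ennreal (cond_dens \<alpha> \<rho> v u) = ennreal (1 / Den) * (ennreal (\<rho> powr (-\<alpha>)) * ennreal (f a1 u) + ennreal (\<rho> powr \<alpha>) * ennreal (f a2 u))"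
      using Denp fnn by (simp add: ennreal_mult[symmetric] ennreal_plus[symmetric] del: ennreal_plus)
  qed
  also have "\<dots> = ennreal (1 / Den) * (ennreal (\<rho> powr (-\<alpha>)) * (\<integral>\<^sup>+u. ennreal (f a1 u) \<partial>lborel) + ennreal (\<rho> powr \<alpha>) * (\<integral>\<^sup>+u. ennreal (f a2 u) \<partial>lborel))"
    by (simp add: nn_integral_cmult nn_integral_add)
  also have "\<dots> = ennreal (1 / Den) * ennreal (\<rho> powr (-\<alpha>) * (Gamma (2 * \<alpha>) / a1 powr (2 * \<alpha>)) + \<rho> powr \<alpha> * (Gamma (2 * \<alpha>) / a2 powr (2 * \<alpha>)))"
    using int[OF a1p] int[OF a2p] g2 by (simp add: ennreal_mult[symmetric] ennreal_plus[symmetric] del: ennreal_plus)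
  also have "\<rho> powr (-\<alpha>) * (Gamma (2 * \<alpha>) / a1 powr (2 * \<alpha>)) + \<rho> powr \<alpha> * (Gamma (2 * \<alpha>) / a2 powr (2 * \<alpha>)) = Den"
    unfolding Den_def using r by (simp add: powr_minus field_simps)
  also have "ennreal (1 / Den) * ennreal Den = 1" using Denp by (simp add: ennreal_mult[symmetric])
  finally show ?thesis .
qed

lemma Jf_simp:
  fixes \<alpha> \<theta>a \<theta>b u v :: real
  assumes a: "\<alpha> > 0" and ta: "\<theta>a > 0" and tb: "\<theta>b > 0" and v: "v > 0"
  shows "Jf \<alpha> \<theta>a \<theta>b u v = v powr (\<alpha> - 1) / (Gamma \<alpha>)^2 *
     ((\<theta>a/\<theta>b) powr \<alpha> * (exp (2 * \<alpha> * u) * exp (- ((1 + v * (\<theta>a/\<theta>b)) * exp u))))"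
proof -
  define y where "y = \<theta>a * exp u"
  have yp: "y > 0" unfolding y_def using ta by simp
  have yvp: "y * v > 0" using yp v by simp
  have e1: "y powr (\<alpha> - 1) * (y * v) powr (\<alpha> - 1) * y * y = y powr (2 * \<alpha>) * v powr (\<alpha> - 1)"
  proof -
    have "y powr (\<alpha> - 1) * y = y powr \<alpha>" using yp powr_add[of y "\<alpha> - 1" 1] by simp
    have "y powr (\<alpha> - 1) * (y * v) powr (\<alpha> - 1) * y * y = (y powr (\<alpha> - 1) * y) * (y powr (\<alpha> - 1) * y) * v powr (\<alpha> - 1)"
      using yp v by (simp add: powr_mult mult_ac)
    also have "\<dots> = y powr \<alpha> * y powr \<alpha> * v powr (\<alpha> - 1)"
      unfolding \<open>y powr (\<alpha> - 1) * y = y powr \<alpha>\<close> by simp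
    also have "\<dots> = y powr (2 * \<alpha>) * v powr (\<alpha> - 1)"
      using yp by (simp add: powr_add[symmetric])
    finally show ?thesis .
  qed
  have e2: "y powr (2 * \<alpha>) = \<theta>a powr (2 * \<alpha>) * exp (2 * \<alpha> * u)"
    unfolding y_def using ta by (simp add: powr_def ln_mult exp_add[symmetric] algebra_simps)
  have e3: "\<theta>a powr (2 * \<alpha>) / (\<theta>a powr \<alpha> * \<theta>b powr \<alpha>) = (\<theta>a/\<theta>b) powr \<alpha>"
  proof -
    have "\<theta>a powr (2 * \<alpha>) = \<theta>a powr \<alpha> * \<theta>a powr \<alpha>" using ta by (simp add: powr_add[symmetric])
    then show ?thesis using ta tb by (simp add: powr_divide)
  qed
  have e4: "exp (- y / \<theta>a) * exp (- (y * v) / \<theta>b) = exp (- ((1 + v * (\<theta>a/\<theta>b)) * exp u))"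
    unfolding y_def using ta tb by (simp add: exp_add[symmetric] field_simps)
  have "Jf \<alpha> \<theta>a \<theta>b u v = (y powr (\<alpha> - 1) * (y * v) powr (\<alpha> - 1) * y * y)
       * (exp (- y / \<theta>a) * exp (- (y * v) / \<theta>b)) / ((Gamma \<alpha>)^2 * (\<theta>a powr \<alpha> * \<theta>b powr \<alpha>))"
    unfolding Jf_def gamma_density_def y_def[symmetric] using yp yvp
    by (simp add: power2_eq_square mult_ac)
  also have "\<dots> = v powr (\<alpha> - 1) / (Gamma \<alpha>)^2 * ((\<theta>a powr (2 * \<alpha>) / (\<theta>a powr \<alpha> * \<theta>b powr \<alpha>)) * exp (2 * \<alpha> * u)
       * (exp (- y / \<theta>a) * exp (- (y * v) / \<theta>b)))"
    unfolding e1 e2 by (simp add: field_simps)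
  also have "\<dots> = v powr (\<alpha> - 1) / (Gamma \<alpha>)^2 *
     ((\<theta>a/\<theta>b) powr \<alpha> * (exp (2 * \<alpha> * u) * exp (- ((1 + v * (\<theta>a/\<theta>b)) * exp u))))"
    unfolding e3 e4 by (simp add: mult_ac)
  finally show ?thesis .
qed

definition Dn :: "real \<Rightarrow> real \<Rightarrow> real \<Rightarrow> real" where
  "Dn \<alpha> \<rho> v = Gamma (2*\<alpha>) * (1 / (\<rho> powr \<alpha> * (1 + v/\<rho>) powr (2*\<alpha>)) + \<rho> powr \<alpha> / (1 + v * \<rho>) powr (2*\<alpha>))"

lemma Dn_pos: assumes "\<alpha> > 0" "\<rho> > 0" "v > 0" shows "Dn \<alpha> \<rho> v > 0"
proof -
  have "1 + v / \<rho> > 0" "1 + v * \<rho> > 0" using assms by (auto intro: add_pos_pos)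
  then show ?thesis unfolding Dn_def using assms by (intro mult_pos_pos add_pos_pos) auto
qed

lemma inv_powr: "(x::real) > 0 \<Longrightarrow> (1 / x) powr a = x powr (- a)"
proof -
  have "(1 / x) powr a = inverse x powr a" by (simp add: divide_inverse)
  also have "\<dots> = inverse (x powr a)" by (rule inverse_powr)
  also have "\<dots> = x powr (- a)" by (rule powr_minus[symmetric])
  finally show ?thesis .
qed

lemma Jsum:
  fixes \<alpha> \<theta>1 \<theta>2 u v :: real
  assumes a: "\<alpha> > 0" and t1: "\<theta>1 > 0" and t2: "\<theta>2 > 0" and v: "v > 0"
  shows "Jf \<alpha> \<theta>1 \<theta>2 u v + Jf \<alpha> \<theta>2 \<theta>1 u v
       = v powr (\<alpha> - 1) / (Gamma \<alpha>)^2 * Dn \<alpha> (rho_of \<theta>1 \<theta>2) v * cond_dens \<alpha> (rho_of \<theta>1 \<theta>2) v u"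
proof -
  define \<rho> where "\<rho> = rho_of \<theta>1 \<theta>2"
  define E where "E x = exp (2 * \<alpha> * u) * exp (- ((1 + v * x) * exp u))" for x
  define C where "C = v powr (\<alpha> - 1) / (Gamma \<alpha>)^2"
  have rp: "\<rho> > 0" unfolding \<rho>_def rho_of_def using t1 t2 by simp
  have Dp: "Dn \<alpha> \<rho> v > 0" by (rule Dn_pos[OF a rp v])
  have c: "cond_dens \<alpha> \<rho> v u = (\<rho> powr (-\<alpha>) * E (1/\<rho>) + \<rho> powr \<alpha> * E \<rho>) / Dn \<alpha> \<rho> v"
    unfolding cond_dens_def Dn_def E_def by (simp add: algebra_simps)
  have num: "Dn \<alpha> \<rho> v * cond_dens \<alpha> \<rho> v u = \<rho> powr (-\<alpha>) * E (1/\<rho>) + \<rho> powr \<alpha> * E \<rho>"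
    unfolding c using Dp by simp
  have J: "Jf \<alpha> \<theta>1 \<theta>2 u v + Jf \<alpha> \<theta>2 \<theta>1 u v = C * ((\<theta>1/\<theta>2) powr \<alpha> * E (\<theta>1/\<theta>2) + (\<theta>2/\<theta>1) powr \<alpha> * E (\<theta>2/\<theta>1))"
    unfolding Jf_simp[OF a t1 t2 v] Jf_simp[OF a t2 t1 v] C_def E_def by (simp add: algebra_simps)
  have "(\<theta>1/\<theta>2) powr \<alpha> * E (\<theta>1/\<theta>2) + (\<theta>2/\<theta>1) powr \<alpha> * E (\<theta>2/\<theta>1) = \<rho> powr (-\<alpha>) * E (1/\<rho>) + \<rho> powr \<alpha> * E \<rho>"
  proof (cases "\<theta>1 \<le> \<theta>2")
    case True
    then have r: "\<rho> = \<theta>1/\<theta>2" unfolding \<rho>_def rho_of_def by (simp add: min_def max_def)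
    have "\<theta>2/\<theta>1 = 1/\<rho>" unfolding r by simp
    then show ?thesis using rp r inv_powr[OF rp, of \<alpha>] by simp
  next
    case False
    then have r: "\<rho> = \<theta>2/\<theta>1" unfolding \<rho>_def rho_of_def by (simp add: min_def max_def)
    have "\<theta>1/\<theta>2 = 1/\<rho>" unfolding r by simp
    then show ?thesis using rp r inv_powr[OF rp, of \<alpha>] by simp
  qed
  then have "Jf \<alpha> \<theta>1 \<theta>2 u v + Jf \<alpha> \<theta>2 \<theta>1 u v = C * (Dn \<alpha> \<rho> v * cond_dens \<alpha> \<rho> v u)"
    unfolding J num by simp
  then show ?thesis unfolding C_def \<rho>_def by (simp add: mult.assoc)
qed



lemma transfer:
  fixes \<alpha> \<theta>1 \<theta>2 :: real and M :: "'a measure" and X1 X2 :: "'a \<Rightarrow> real"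
    and h :: "real \<times> real \<Rightarrow> ennreal"
  assumes a: "\<alpha> > 0" and t1: "\<theta>1 > 0" and t2: "\<theta>2 > 0"
    and P: "prob_space M"
    and d1: "distributed M lborel X1 (\<lambda>x. ennreal (gamma_density \<alpha> \<theta>1 x))"
    and d2: "distributed M lborel X2 (\<lambda>x. ennreal (gamma_density \<alpha> \<theta>2 x))"
    and ind: "prob_space.indep_var M borel X1 borel X2"
    and h: "h \<in> borel_measurable (borel \<Otimes>\<^sub>M borel)"
  shows "(\<integral>\<^sup>+\<omega>. h (X1 \<omega>, X2 \<omega>) \<partial>M)
       = (\<integral>\<^sup>+x. \<integral>\<^sup>+y. h (x, y) * ennreal (gamma_density \<alpha> \<theta>1 x * gamma_density \<alpha> \<theta>2 y) \<partial>lborel \<partial>lborel)"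
proof -
  interpret P: prob_space M by fact
  define g1 where "g1 = (\<lambda>x. ennreal (gamma_density \<alpha> \<theta>1 x))"
  define g2 where "g2 = (\<lambda>x. ennreal (gamma_density \<alpha> \<theta>2 x))"
  have g1m[measurable]: "g1 \<in> borel_measurable borel" unfolding g1_def by measurable
  have g2m[measurable]: "g2 \<in> borel_measurable borel" unfolding g2_def by measurable
  have X1m[measurable]: "X1 \<in> borel_measurable M" using distributed_measurable[OF d1] by simp
  have X2m[measurable]: "X2 \<in> borel_measurable M" using distributed_measurable[OF d2] by simp
  have D1: "distr M borel X1 = density lborel g1"
    using distributed_distr_eq_density[OF d1] unfolding g1_def by (metis distr_cong sets_lborel)
  have D2: "distr M borel X2 = density lborel g2"
    using distributed_distr_eq_density[OF d2] unfolding g2_def by (metis distr_cong sets_lborel)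
  have sf: "sigma_finite_measure (density lborel g2)"
  proof -
    have "prob_space (density lborel g2)" unfolding D2[symmetric] by (rule P.prob_space_distr) simp
    then show ?thesis by (simp add: prob_space_imp_sigma_finite)
  qed
  have J: "distr M (borel \<Otimes>\<^sub>M borel) (\<lambda>\<omega>. (X1 \<omega>, X2 \<omega>)) = density (lborel \<Otimes>\<^sub>M lborel) (\<lambda>(x, y). g1 x * g2 y)"
  proof -
    have "distr M (borel \<Otimes>\<^sub>M borel) (\<lambda>\<omega>. (X1 \<omega>, X2 \<omega>)) = distr M borel X1 \<Otimes>\<^sub>M distr M borel X2"
      using ind unfolding P.indep_var_distribution_eq by simp
    also have "\<dots> = density lborel g1 \<Otimes>\<^sub>M density lborel g2" unfolding D1 D2 ..
    also have "\<dots> = density (lborel \<Otimes>\<^sub>M lborel) (\<lambda>(x, y). g1 x * g2 y)"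
      by (rule pair_measure_density) (auto intro: sf lborel.sigma_finite_measure_axioms)
    finally show ?thesis .
  qed
  have hm[measurable]: "h \<in> borel_measurable (lborel \<Otimes>\<^sub>M lborel)"
    using h by (simp cong: measurable_cong_sets)
  have "(\<integral>\<^sup>+\<omega>. h (X1 \<omega>, X2 \<omega>) \<partial>M) = (\<integral>\<^sup>+z. h z \<partial>distr M (borel \<Otimes>\<^sub>M borel) (\<lambda>\<omega>. (X1 \<omega>, X2 \<omega>)))"
    by (rule nn_integral_distr[symmetric]) (auto simp: h)
  also have "\<dots> = (\<integral>\<^sup>+z. (case z of (x, y) \<Rightarrow> g1 x * g2 y) * h z \<partial>(lborel \<Otimes>\<^sub>M lborel))"
    unfolding J by (rule nn_integral_density) auto
  also have "\<dots> = (\<integral>\<^sup>+x. \<integral>\<^sup>+y. (g1 x * g2 y) * h (x, y) \<partial>lborel \<partial>lborel)"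
    by (rule lborel.nn_integral_fst[symmetric, where f = "\<lambda>z. (case z of (x, y) \<Rightarrow> g1 x * g2 y) * h z", simplified]) auto
  also have "\<dots> = (\<integral>\<^sup>+x. \<integral>\<^sup>+y. h (x, y) * ennreal (gamma_density \<alpha> \<theta>1 x * gamma_density \<alpha> \<theta>2 y) \<partial>lborel \<partial>lborel)"
    unfolding g1_def g2_def
    using gamma_density_nonneg[OF a t1] gamma_density_nonneg[OF a t2]
    by (intro nn_integral_cong) (simp add: ennreal_mult[symmetric] mult.commute)
  finally show ?thesis .
qed

lemma per_v:
  fixes \<alpha> \<theta>1 \<theta>2 v :: real and A B :: "real set"
  assumes a: "\<alpha> > 0" and t1: "\<theta>1 > 0" and t2: "\<theta>2 > 0" and v: "v \<noteq> 1"
    and A[measurable]: "A \<in> sets borel"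
  defines "F \<equiv> (\<lambda>v. \<integral>\<^sup>+u. indicator A u * ennreal (cond_dens \<alpha> (rho_of \<theta>1 \<theta>2) v u) \<partial>lborel)"
  shows "(\<integral>\<^sup>+u. (indicator A u * indicator B v) * (indicator {1..} v * ennreal (Jf \<alpha> \<theta>1 \<theta>2 u v)
              + indicator {1<..} v * ennreal (Jf \<alpha> \<theta>2 \<theta>1 u v)) \<partial>lborel)
       = (\<integral>\<^sup>+u. (indicator B v * F v) * (indicator {1..} v * ennreal (Jf \<alpha> \<theta>1 \<theta>2 u v)
              + indicator {1<..} v * ennreal (Jf \<alpha> \<theta>2 \<theta>1 u v)) \<partial>lborel)"
proof (cases "v < 1")
  case True
  then show ?thesis by (simp add: indicator_def)
next
  case False
  with v have v1: "v > 1" by simp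
  then have vp: "v > 0" by simp
  define \<rho> where "\<rho> = rho_of \<theta>1 \<theta>2"
  have rp: "\<rho> > 0" unfolding \<rho>_def rho_of_def using t1 t2 by simp
  define K where "K = v powr (\<alpha> - 1) / (Gamma \<alpha>)^2 * Dn \<alpha> \<rho> v"
  have gp: "(Gamma \<alpha>)^2 > 0" using Gamma_real_pos[OF a] by simp
  have Kp: "K > 0" unfolding K_def using Dn_pos[OF a rp vp] vp gp
    by (intro mult_pos_pos divide_pos_pos) auto
  have cnn: "cond_dens \<alpha> \<rho> v u \<ge> 0" for u
  proof -
    have "K * cond_dens \<alpha> \<rho> v u = Jf \<alpha> \<theta>1 \<theta>2 u v + Jf \<alpha> \<theta>2 \<theta>1 u v"
      using Jsum[OF a t1 t2 vp, of u] unfolding K_def \<rho>_def by simp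
    also have "\<dots> \<ge> 0"
      unfolding Jf_def using gamma_density_nonneg[OF a t1] gamma_density_nonneg[OF a t2] t1 t2
      by (intro add_nonneg_nonneg mult_nonneg_nonneg) auto
    finally show ?thesis using Kp by (simp add: zero_le_mult_iff)
  qed
  have Jeq: "indicator {1..} v * ennreal (Jf \<alpha> \<theta>1 \<theta>2 u v) + indicator {1<..} v * ennreal (Jf \<alpha> \<theta>2 \<theta>1 u v)
      = ennreal K * ennreal (cond_dens \<alpha> \<rho> v u)" for u
  proof -
    have nn1: "Jf \<alpha> \<theta>1 \<theta>2 u v \<ge> 0" and nn2: "Jf \<alpha> \<theta>2 \<theta>1 u v \<ge> 0"
      unfolding Jf_def using gamma_density_nonneg[OF a t1] gamma_density_nonneg[OF a t2] t1 t2
      by (auto intro!: mult_nonneg_nonneg)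
    have "indicator {1..} v * ennreal (Jf \<alpha> \<theta>1 \<theta>2 u v) + indicator {1<..} v * ennreal (Jf \<alpha> \<theta>2 \<theta>1 u v)
        = ennreal (Jf \<alpha> \<theta>1 \<theta>2 u v + Jf \<alpha> \<theta>2 \<theta>1 u v)"
      using v1 nn1 nn2 by (simp add: ennreal_plus)
    also have "\<dots> = ennreal (K * cond_dens \<alpha> \<rho> v u)"
      using Jsum[OF a t1 t2 vp, of u] unfolding K_def \<rho>_def by simp
    also have "\<dots> = ennreal K * ennreal (cond_dens \<alpha> \<rho> v u)"
      using Kp cnn by (simp add: ennreal_mult)
    finally show ?thesis .
  qed
  have one: "(\<integral>\<^sup>+u. ennreal (cond_dens \<alpha> \<rho> v u) \<partial>lborel) = 1"
    by (rule cond_int_one[OF a rp vp])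
  have cm[measurable]: "(\<lambda>u. cond_dens \<alpha> \<rho> v u) \<in> borel_measurable borel"
    unfolding cond_dens_def by measurable
  have "(\<integral>\<^sup>+u. (indicator A u * indicator B v) * (ennreal K * ennreal (cond_dens \<alpha> \<rho> v u)) \<partial>lborel)
      = (\<integral>\<^sup>+u. (indicator B v * ennreal K) * (indicator A u * ennreal (cond_dens \<alpha> \<rho> v u)) \<partial>lborel)"
    by (intro nn_integral_cong) (simp add: mult_ac)
  also have "\<dots> = (indicator B v * ennreal K) * F v"
    unfolding F_def \<rho>_def[symmetric] by (rule nn_integral_cmult) measurable
  also have "\<dots> = (indicator B v * F v * ennreal K) * (\<integral>\<^sup>+u. ennreal (cond_dens \<alpha> \<rho> v u) \<partial>lborel)"
    unfolding one by (simp add: mult_ac)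
  also have "\<dots> = (\<integral>\<^sup>+u. (indicator B v * F v * ennreal K) * ennreal (cond_dens \<alpha> \<rho> v u) \<partial>lborel)"
    by (rule nn_integral_cmult[symmetric]) measurable
  also have "\<dots> = (\<integral>\<^sup>+u. (indicator B v * F v) * (ennreal K * ennreal (cond_dens \<alpha> \<rho> v u)) \<partial>lborel)"
    by (intro nn_integral_cong) (simp add: mult_ac)
  finally show ?thesis unfolding Jeq .
qed

lemma part1:
  fixes \<alpha> \<theta>1 \<theta>2 :: real and M :: "'a measure" and X1 X2 :: "'a \<Rightarrow> real" and A B :: "real set"
  assumes a: "\<alpha> > 0" and t1: "\<theta>1 > 0" and t2: "\<theta>2 > 0"
    and P: "prob_space M"
    and d1: "distributed M lborel X1 (\<lambda>x. ennreal (gamma_density \<alpha> \<theta>1 x))"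
    and d2: "distributed M lborel X2 (\<lambda>x. ennreal (gamma_density \<alpha> \<theta>2 x))"
    and ind: "prob_space.indep_var M borel X1 borel X2"
    and A[measurable]: "A \<in> sets borel" and B[measurable]: "B \<in> sets borel"
  shows "emeasure M {\<omega> \<in> space M. ln (min (X1 \<omega>) (X2 \<omega>)) - H_M \<theta>1 \<theta>2 (X1 \<omega>) (X2 \<omega>) \<in> A
                 \<and> max (X1 \<omega>) (X2 \<omega>) / min (X1 \<omega>) (X2 \<omega>) \<in> B}
       = (\<integral>\<^sup>+ v. indicator B v * (\<integral>\<^sup>+ u. indicator A u * ennreal (cond_dens \<alpha> (rho_of \<theta>1 \<theta>2) v u) \<partial>lborel)
            \<partial>(distr M borel (\<lambda>\<omega>. max (X1 \<omega>) (X2 \<omega>) / min (X1 \<omega>) (X2 \<omega>))))"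
proof -
  define F where "F = (\<lambda>v. \<integral>\<^sup>+u. indicator A u * ennreal (cond_dens \<alpha> (rho_of \<theta>1 \<theta>2) v u) \<partial>lborel)"
  have Fm[measurable]: "F \<in> borel_measurable borel"
    unfolding F_def cond_dens_def by measurable
  have X1m[measurable]: "X1 \<in> borel_measurable M" using distributed_measurable[OF d1] by simp
  have X2m[measurable]: "X2 \<in> borel_measurable M" using distributed_measurable[OF d2] by simp
  have HMm[measurable]: "(\<lambda>(x, y). H_M \<theta>1 \<theta>2 x y) \<in> borel_measurable (borel \<Otimes>\<^sub>M borel)"
    unfolding H_M_def by measurable
  define J where "J = (\<lambda>u v. indicator {1..} v * ennreal (Jf \<alpha> \<theta>1 \<theta>2 u v) + indicator {1<..} v * ennreal (Jf \<alpha> \<theta>2 \<theta>1 u v))"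
  define S where "S = {\<omega> \<in> space M. ln (min (X1 \<omega>) (X2 \<omega>)) - H_M \<theta>1 \<theta>2 (X1 \<omega>) (X2 \<omega>) \<in> A
                 \<and> max (X1 \<omega>) (X2 \<omega>) / min (X1 \<omega>) (X2 \<omega>) \<in> B}"
  have Sm: "S \<in> sets M" unfolding S_def H_M_def by measurable
  have "emeasure M S = (\<integral>\<^sup>+\<omega>. indicator S \<omega> \<partial>M)" using Sm by simp
  also have "\<dots> = (\<integral>\<^sup>+\<omega>. (\<lambda>(x, y). indicator A (ln (min x y) - H_M \<theta>1 \<theta>2 x y) * indicator B (max x y / min x y)) (X1 \<omega>, X2 \<omega>) \<partial>M)"
    by (intro nn_integral_cong) (auto simp: S_def indicator_def)
  also have "\<dots> = (\<integral>\<^sup>+x. \<integral>\<^sup>+y. (indicator A (ln (min x y) - H_M \<theta>1 \<theta>2 x y) * indicator B (max x y / min x y))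
          * ennreal (gamma_density \<alpha> \<theta>1 x * gamma_density \<alpha> \<theta>2 y) \<partial>lborel \<partial>lborel)"
    by (subst transfer[OF a t1 t2 P d1 d2 ind]) (auto simp: H_M_def)
  also have "\<dots> = (\<integral>\<^sup>+v. \<integral>\<^sup>+u. (indicator A u * indicator B v) * J u v \<partial>lborel \<partial>lborel)"
    unfolding J_def by (rule core_transform[OF _ a t1 t2, where G = "\<lambda>u v. indicator A u * indicator B v"]) measurable
  also have "\<dots> = (\<integral>\<^sup>+v. \<integral>\<^sup>+u. (indicator B v * F v) * J u v \<partial>lborel \<partial>lborel)"
  proof (rule nn_integral_cong_AE)
    show "AE v in lborel. (\<integral>\<^sup>+u. (indicator A u * indicator B v) * J u v \<partial>lborel) = (\<integral>\<^sup>+u. (indicator B v * F v) * J u v \<partial>lborel)"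
      using AE_lborel_singleton[of 1] 
    proof (rule eventually_mono)
      fix v :: real assume "v \<noteq> 1"
      then show "(\<integral>\<^sup>+u. (indicator A u * indicator B v) * J u v \<partial>lborel) = (\<integral>\<^sup>+u. (indicator B v * F v) * J u v \<partial>lborel)"
        unfolding J_def F_def by (rule per_v[OF a t1 t2 _ A])
    qed
  qed
  also have "\<dots> = (\<integral>\<^sup>+x. \<integral>\<^sup>+y. (indicator B (max x y / min x y) * F (max x y / min x y))
          * ennreal (gamma_density \<alpha> \<theta>1 x * gamma_density \<alpha> \<theta>2 y) \<partial>lborel \<partial>lborel)"
    unfolding J_def by (rule core_transform[OF _ a t1 t2, where G = "\<lambda>u v. indicator B v * F v", symmetric]) measurable
  also have "\<dots> = (\<integral>\<^sup>+\<omega>. (\<lambda>(x, y). indicator B (max x y / min x y) * F (max x y / min x y)) (X1 \<omega>, X2 \<omega>) \<partial>M)"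
    by (subst transfer[OF a t1 t2 P d1 d2 ind]) auto
  also have "\<dots> = (\<integral>\<^sup>+ v. indicator B v * F v \<partial>(distr M borel (\<lambda>\<omega>. max (X1 \<omega>) (X2 \<omega>) / min (X1 \<omega>) (X2 \<omega>))))"
    by (subst nn_integral_distr) auto
  finally show ?thesis unfolding S_def F_def .
qed


theorem lemma3p2:
  fixes \<alpha> \<theta>1 \<theta>2 :: real
    and M :: "'a measure"
    and X1 X2 :: "'a \<Rightarrow> real"
  assumes "\<alpha> > 0" and "\<theta>1 > 0" and "\<theta>2 > 0"
    and "prob_space M"
    and "distributed M lborel X1 (\<lambda>x. ennreal (gamma_density \<alpha> \<theta>1 x))"
    and "distributed M lborel X2 (\<lambda>x. ennreal (gamma_density \<alpha> \<theta>2 x))"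
    and "prob_space.indep_var M borel X1 borel X2"
  shows
    "(let Z1 = (\<lambda>\<omega>. min (X1 \<omega>) (X2 \<omega>));
          Z2 = (\<lambda>\<omega>. max (X1 \<omega>) (X2 \<omega>));
          U1 = (\<lambda>\<omega>. ln (Z1 \<omega>) - H_M \<theta>1 \<theta>2 (X1 \<omega>) (X2 \<omega>));
          V = (\<lambda>\<omega>. Z2 \<omega> / Z1 \<omega>);
          \<rho> = rho_of \<theta>1 \<theta>2
      in \<forall>A \<in> sets borel. \<forall>B \<in> sets borel.
           emeasure M {\<omega> \<in> space M. U1 \<omega> \<in> A \<and> V \<omega> \<in> B}
           = (\<integral>\<^sup>+ v. indicator B v *
                 (\<integral>\<^sup>+ u. indicator A u * ennreal (cond_dens \<alpha> \<rho> v u) \<partial>lborel)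
               \<partial>(distr M borel V)))
     \<and> (\<forall>v::real. 1 \<le> v \<and> v \<le> min (1 + 1 / (2*\<alpha>)) (1 + sqrt 3) \<longrightarrow>
          (INF \<rho>\<in>{0<..1}. k_fun \<alpha> v \<rho>) = ln (1 + v))"
  proof -
  have p2: "\<forall>v::real. 1 \<le> v \<and> v \<le> min (1 + 1 / (2*\<alpha>)) (1 + sqrt 3) \<longrightarrow>
          (INF \<rho>\<in>{0<..1}. k_fun \<alpha> v \<rho>) = ln (1 + v)"
    by (rule part2[OF assms(1)])
  show ?thesis unfolding Let_def
  proof (intro conjI ballI)
    fix A B :: "real set" assume "A \<in> sets borel" "B \<in> sets borel"
    then show "emeasure M {\<omega> \<in> space M. ln (min (X1 \<omega>) (X2 \<omega>)) - H_M \<theta>1 \<theta>2 (X1 \<omega>) (X2 \<omega>) \<in> A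
                 \<and> max (X1 \<omega>) (X2 \<omega>) / min (X1 \<omega>) (X2 \<omega>) \<in> B}
       = (\<integral>\<^sup>+ v. indicator B v * (\<integral>\<^sup>+ u. indicator A u * ennreal (cond_dens \<alpha> (rho_of \<theta>1 \<theta>2) v u) \<partial>lborel)
            \<partial>(distr M borel (\<lambda>\<omega>. max (X1 \<omega>) (X2 \<omega>) / min (X1 \<omega>) (X2 \<omega>))))"
      by (rule part1[OF assms])
  next
    show "\<forall>v::real. 1 \<le> v \<and> v \<le> min (1 + 1 / (2*\<alpha>)) (1 + sqrt 3) \<longrightarrow>
          (INF \<rho>\<in>{0<..1}. k_fun \<alpha> v \<rho>) = ln (1 + v)" by (rule p2)
  qed
qed

end
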